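(* Let $\{x,x_1\}$ be a Bertrand D-pair. Then: (i) if one of the curves $x$, $x_1$ is a principal line, then $k_g - k_{g_1} = \lambda k_g k_{g_1}$; (ii) if $x_1$ is a geodesic curve, then $k_g = -\lambda \tau_g \tau_{g_1}$; (iii) if $x$ is a geodesic curve, then $k_{g_1} = \lambda \tau_g \tau_{g_1}$.
   Context: For a unit-speed curve $x(s)$ on an oriented surface $S\subset\mathbb{E}^3$, the Darboux frame is $\{T,g,n\}$ ($T$ unit tangent, $n$ unit surface normal along the curve, $g=n\times T$), with $\dot T = k_g g + k_n n$, $\dot g = -k_g T + \tau_g n$, $\dot n = -k_n T - \tau_g g$; $k_g,k_n,\tau_g$ are the geodesic curvature, normal curvature and geodesic torsion. For $x_1(s_1)$ on an oriented surface $S_1$ the analogous objects carry subscript $1$. $\{x,x_1\}$ is a Bertrand D-pair if there is a correspondence of points such that at corresponding points $g$ coincides with $g_1$; then $x(s)=x_1(s_1)+\lambda g_1(s_1)$ at corresponding points with $\lambda$ a nonzero constant. A curve is geodesic iff $k_g=0$ and a principal line iff $\tau_g=0$. *)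

theory Defs
  imports "HOL-Analysis.Analysis"
begin

text \<open>Darboux frame {T, g, n} of a unit-speed curve x (parameter s ranging over
  an open interval I) lying on an oriented surface: n is the unit surface normal
  along the curve, g = n x T, and kg, kn, tg are geodesic curvature, normal
  curvature and geodesic torsion, given by the Darboux equations.\<close>

definition darboux_frame ::
  "real set \<Rightarrow> (real \<Rightarrow> real^3) \<Rightarrow> (real \<Rightarrow> real^3) \<Rightarrow> (real \<Rightarrow> real^3) \<Rightarrow> (real \<Rightarrow> real^3)
   \<Rightarrow> (real \<Rightarrow> real) \<Rightarrow> (real \<Rightarrow> real) \<Rightarrow> (real \<Rightarrow> real) \<Rightarrow> bool" where
  "darboux_frame I x T g n kg kn tg \<longleftrightarrow>
     open I \<and> is_interval I \<and> I \<noteq> {} \<and>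
     (\<forall>s\<in>I.
        (x has_vector_derivative T s) (at s) \<and>
        norm (T s) = 1 \<and> norm (n s) = 1 \<and> T s \<bullet> n s = 0 \<and>
        g s = cross3 (n s) (T s) \<and>
        (T has_vector_derivative (kg s *\<^sub>R g s + kn s *\<^sub>R n s)) (at s) \<and>
        (g has_vector_derivative (- kg s *\<^sub>R T s + tg s *\<^sub>R n s)) (at s) \<and>
        (n has_vector_derivative (- kn s *\<^sub>R T s - tg s *\<^sub>R g s)) (at s))"

definition geodesic_curve :: "real set \<Rightarrow> (real \<Rightarrow> real) \<Rightarrow> bool" where
  "geodesic_curve I kg \<longleftrightarrow> (\<forall>s\<in>I. kg s = 0)"

definition principal_line :: "real set \<Rightarrow> (real \<Rightarrow> real) \<Rightarrow> bool" where
  "principal_line I tg \<longleftrightarrow> (\<forall>s\<in>I. tg s = 0)"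

text \<open>Bertrand D-pair: a (smooth, bijective) correspondence s = phi s1 of points
  such that g(phi s1) = g1 s1; then x(phi s1) = x1 s1 + lam g1 s1 for a nonzero
  constant lam.\<close>

definition bertrand_D_pair ::
  "real set \<Rightarrow> (real \<Rightarrow> real^3) \<Rightarrow> (real \<Rightarrow> real^3) \<Rightarrow>
   real set \<Rightarrow> (real \<Rightarrow> real^3) \<Rightarrow> (real \<Rightarrow> real^3) \<Rightarrow>
   (real \<Rightarrow> real) \<Rightarrow> real \<Rightarrow> bool" where
  "bertrand_D_pair I x g I1 x1 g1 phi lam \<longleftrightarrow>
     bij_betw phi I1 I \<and> (\<forall>s1\<in>I1. phi differentiable (at s1)) \<and>
     (\<forall>s1\<in>I1. g (phi s1) = g1 s1) \<and>
     lam \<noteq> 0 \<and> (\<forall>s1\<in>I1. x (phi s1) = x1 s1 + lam *\<^sub>R g1 s1)"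

end

theory Submission imports Defs begin

lemma alg:
  fixes T n T1 n1 :: "real^3" and a l k1 t1 kg tg :: real
  assumes nT: "norm T = 1" and nn: "norm n = 1" and Tn: "T \<bullet> n = 0"
    and nT1: "norm T1 = 1" and nn1: "norm n1 = 1" and Tn1: "T1 \<bullet> n1 = 0"
    and gg: "cross3 n T = cross3 n1 T1"
    and A: "a *\<^sub>R T = T1 + l *\<^sub>R (- k1 *\<^sub>R T1 + t1 *\<^sub>R n1)"
    and B: "a *\<^sub>R (- kg *\<^sub>R T + tg *\<^sub>R n) = - k1 *\<^sub>R T1 + t1 *\<^sub>R n1"
  shows "a \<noteq> 0 \<and> a^2 = (1 - l*k1)^2 + l^2 * t1^2 \<and> a^2 * kg = k1*(1-l*k1) - l*t1^2
         \<and> a^2 * tg = t1"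
proof -
  have TT: "T \<bullet> T = 1" using nT by (simp add: norm_eq_sqrt_inner)
  have nnn: "n \<bullet> n = 1" using nn by (simp add: norm_eq_sqrt_inner)
  have TT1: "T1 \<bullet> T1 = 1" using nT1 by (simp add: norm_eq_sqrt_inner)
  have nnn1: "n1 \<bullet> n1 = 1" using nn1 by (simp add: norm_eq_sqrt_inner)
  have nT': "n \<bullet> T = 0" "n1 \<bullet> T1 = 0" using Tn Tn1 by (simp_all add: inner_commute)
  have A1: "(a *\<^sub>R T) \<bullet> T1 = 1 - l*k1"
    unfolding A by (simp add: inner_simps TT1 Tn1 nT' algebra_simps)
  have B1: "(a *\<^sub>R (- kg *\<^sub>R T + tg *\<^sub>R n)) \<bullet> T1 = - k1"
    unfolding B by (simp add: inner_simps TT1 Tn1 nT' algebra_simps)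
  have a0: "a \<noteq> 0"
  proof
    assume "a = 0"
    then show False using A1 B1 by simp
  qed
  have AA: "(a *\<^sub>R T) \<bullet> (a *\<^sub>R T) = (1 - l*k1)^2 + l^2 * t1^2"
    unfolding A by (simp add: inner_simps TT1 nnn1 Tn1 nT' algebra_simps power2_eq_square)
  hence a2: "a^2 = (1 - l*k1)^2 + l^2 * t1^2" by (simp add: TT power2_eq_square)
  have AB: "(a *\<^sub>R T) \<bullet> (a *\<^sub>R (- kg *\<^sub>R T + tg *\<^sub>R n)) = - k1*(1-l*k1) + l*t1^2"
    unfolding A B by (simp add: inner_simps TT1 nnn1 Tn1 nT' algebra_simps power2_eq_square)
  hence k: "a^2 * kg = k1*(1-l*k1) - l*t1^2"
    by (simp add: inner_simps TT Tn algebra_simps power2_eq_square)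
  have CR: "cross3 (a *\<^sub>R T) (a *\<^sub>R (- kg *\<^sub>R T + tg *\<^sub>R n)) = - t1 *\<^sub>R cross3 n1 T1"
    unfolding A B
    apply (simp only: cross_add_left cross_add_right cross_mult_left cross_mult_right cross_refl)
    apply (simp add: cross_skew[of T1 n1] algebra_simps)
    done
  have CL: "cross3 (a *\<^sub>R T) (a *\<^sub>R (- kg *\<^sub>R T + tg *\<^sub>R n)) = - (a^2*tg) *\<^sub>R cross3 n T"
    apply (simp only: cross_add_left cross_add_right cross_mult_left cross_mult_right cross_refl)
    apply (simp add: cross_skew[of T n] algebra_simps power2_eq_square)
    done
  have gn: "norm (cross3 n T) = 1"
    using norm_cross[of n T] nT nn nT' norm_ge_zero[of "cross3 n T"] by (auto simp add: power2_eq_1_iff)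
  hence "cross3 n T \<noteq> 0" by auto
  moreover have "(a^2*tg - t1) *\<^sub>R cross3 n T = 0"
    using CR CL gg by (simp add: algebra_simps) (metis)
  ultimately have "a^2*tg = t1" by simp
  thus ?thesis using a0 a2 k by simp
qed

lemma pointwise:
  assumes D: "darboux_frame I x T g n kg kn tg"
    and D1: "darboux_frame I1 x1 T1 g1 n1 kg1 kn1 tg1"
    and P: "bertrand_D_pair I x g I1 x1 g1 phi lam"
    and s1: "s1 \<in> I1"
  shows "\<exists>a. a \<noteq> 0 \<and> a^2 = (1 - lam*kg1 s1)^2 + lam^2 * (tg1 s1)^2
     \<and> a^2 * kg (phi s1) = kg1 s1*(1-lam*kg1 s1) - lam*(tg1 s1)^2
     \<and> a^2 * tg (phi s1) = tg1 s1"
proof -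
  from P have bij: "bij_betw phi I1 I" and dphi: "phi differentiable (at s1)"
    and geq: "\<And>t. t \<in> I1 \<Longrightarrow> g (phi t) = g1 t"
    and xeq: "\<And>t. t \<in> I1 \<Longrightarrow> x (phi t) = x1 t + lam *\<^sub>R g1 t"
    using s1 unfolding bertrand_D_pair_def by auto
  have sI: "phi s1 \<in> I" using bij s1 by (auto simp: bij_betw_def)
  from D1 have oI1: "open I1" unfolding darboux_frame_def by auto
  obtain a where da: "(phi has_vector_derivative a) (at s1)"
    using dphi vector_derivative_works by blast
  note Ds = D[unfolded darboux_frame_def, THEN conjunct2, THEN conjunct2, THEN conjunct2, rule_format, OF sI]
  note D1s = D1[unfolded darboux_frame_def, THEN conjunct2, THEN conjunct2, THEN conjunct2, rule_format, OF s1]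
  have c1: "((x \<circ> phi) has_vector_derivative (a *\<^sub>R T (phi s1))) (at s1)"
    by (rule vector_diff_chain_at[OF da]) (use Ds in auto)
  have c2: "((\<lambda>t. x1 t + lam *\<^sub>R g1 t) has_vector_derivative
      (T1 s1 + lam *\<^sub>R (- kg1 s1 *\<^sub>R T1 s1 + tg1 s1 *\<^sub>R n1 s1))) (at s1)"
    using D1s by (auto intro!: derivative_eq_intros)
  have c1': "((\<lambda>t. x1 t + lam *\<^sub>R g1 t) has_vector_derivative (a *\<^sub>R T (phi s1))) (at s1)"
    by (rule has_vector_derivative_transform_within_open[OF c1 oI1 s1]) (simp add: xeq)
  have A: "a *\<^sub>R T (phi s1) = T1 s1 + lam *\<^sub>R (- kg1 s1 *\<^sub>R T1 s1 + tg1 s1 *\<^sub>R n1 s1)"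
    using vector_derivative_unique_at[OF c1' c2] .
  have e1: "((g \<circ> phi) has_vector_derivative (a *\<^sub>R (- kg (phi s1) *\<^sub>R T (phi s1) + tg (phi s1) *\<^sub>R n (phi s1)))) (at s1)"
    by (rule vector_diff_chain_at[OF da]) (use Ds in auto)
  have e1': "(g1 has_vector_derivative (a *\<^sub>R (- kg (phi s1) *\<^sub>R T (phi s1) + tg (phi s1) *\<^sub>R n (phi s1)))) (at s1)"
    by (rule has_vector_derivative_transform_within_open[OF e1 oI1 s1]) (simp add: geq)
  have B: "a *\<^sub>R (- kg (phi s1) *\<^sub>R T (phi s1) + tg (phi s1) *\<^sub>R n (phi s1)) = - kg1 s1 *\<^sub>R T1 s1 + tg1 s1 *\<^sub>R n1 s1"
    using vector_derivative_unique_at[OF e1'] D1s by auto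
  have gg: "cross3 (n (phi s1)) (T (phi s1)) = cross3 (n1 s1) (T1 s1)"
    using Ds D1s geq[OF s1] by auto
  show ?thesis
    by (rule exI, rule alg[OF _ _ _ _ _ _ gg A B]) (use Ds D1s in auto)
qed

theorem mainTheorem4:
  fixes x T g n x1 T1 g1 n1 :: "real \<Rightarrow> real^3"
    and kg kn tg kg1 kn1 tg1 phi :: "real \<Rightarrow> real"
    and I I1 :: "real set" and lam :: real
  assumes "darboux_frame I x T g n kg kn tg"
    and "darboux_frame I1 x1 T1 g1 n1 kg1 kn1 tg1"
    and "bertrand_D_pair I x g I1 x1 g1 phi lam"
  shows "(principal_line I tg \<or> principal_line I1 tg1 \<longrightarrow>
           (\<forall>s1\<in>I1. kg (phi s1) - kg1 s1 = lam * kg (phi s1) * kg1 s1))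
       \<and> (geodesic_curve I1 kg1 \<longrightarrow>
           (\<forall>s1\<in>I1. kg (phi s1) = - lam * tg (phi s1) * tg1 s1))
       \<and> (geodesic_curve I kg \<longrightarrow>
           (\<forall>s1\<in>I1. kg1 s1 = lam * tg (phi s1) * tg1 s1))"
proof (intro conjI impI ballI)
  fix s1 assume s1: "s1 \<in> I1"
  have sI: "phi s1 \<in> I" using assms(3) s1 by (auto simp: bertrand_D_pair_def bij_betw_def)
  obtain a where a0: "a \<noteq> 0" and E1: "a^2 = (1 - lam*kg1 s1)^2 + lam^2 * (tg1 s1)^2"
     and E2: "a^2 * kg (phi s1) = kg1 s1*(1-lam*kg1 s1) - lam*(tg1 s1)^2"
     and E3: "a^2 * tg (phi s1) = tg1 s1"
    using pointwise[OF assms s1] by blast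
  define A where "A = a^2"
  have A0: "A \<noteq> 0" using a0 by (simp add: A_def)
  note E = E1[folded A_def] E2[folded A_def] E3[folded A_def]
  {
    assume "principal_line I tg \<or> principal_line I1 tg1"
    hence t0: "tg1 s1 = 0" using sI s1 E(3) by (auto simp: principal_line_def)
    hence "A = (1 - lam*kg1 s1)^2" "A * kg (phi s1) = kg1 s1*(1-lam*kg1 s1)" using E by auto
    hence h: "A = (1 - lam*kg1 s1)^2" "A * kg (phi s1) = kg1 s1*(1-lam*kg1 s1)" by auto
    have "(1 - lam*kg1 s1) * ((1 - lam*kg1 s1) * kg (phi s1) - kg1 s1) = A * kg (phi s1) - kg1 s1*(1-lam*kg1 s1)"
      unfolding h(1) by (simp add: algebra_simps power2_eq_square)
    hence "(1 - lam*kg1 s1) * ((1 - lam*kg1 s1) * kg (phi s1) - kg1 s1) = 0" using h(2) by simp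
    moreover have "1 - lam*kg1 s1 \<noteq> 0" using A0 h(1) by auto
    ultimately have "(1 - lam*kg1 s1) * kg (phi s1) - kg1 s1 = 0" by simp
    then show "kg (phi s1) - kg1 s1 = lam * kg (phi s1) * kg1 s1"
      by (simp add: algebra_simps)
  }
  {
    assume "geodesic_curve I1 kg1"
    hence k0: "kg1 s1 = 0" using s1 by (auto simp: geodesic_curve_def)
    have "A * kg (phi s1) = A * (- lam * tg (phi s1) * tg1 s1)"
    proof -
      have "A * (- lam * tg (phi s1) * tg1 s1) = - lam * tg1 s1 * (A * tg (phi s1))" by (simp add: algebra_simps)
      also have "\<dots> = - lam * (tg1 s1)^2" using E(3) by (simp add: power2_eq_square)
      also have "\<dots> = A * kg (phi s1)" using E(2) k0 by simp
      finally show ?thesis by simp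
    qed
    thus "kg (phi s1) = - lam * tg (phi s1) * tg1 s1" using A0 mult_left_cancel by blast
  }
  {
    assume "geodesic_curve I kg"
    hence k0: "kg (phi s1) = 0" using sI by (auto simp: geodesic_curve_def)
    have "A * kg1 s1 = A * (lam * tg (phi s1) * tg1 s1)"
    proof -
      have r: "lam * (tg1 s1)^2 = kg1 s1*(1-lam*kg1 s1)" using E(2) k0 by simp
      have "A * (lam * tg (phi s1) * tg1 s1) = lam * (tg1 s1)^2"
        using E(3) by (simp add: algebra_simps power2_eq_square)
      also have "\<dots> = A * kg1 s1"
      proof -
        have "A * kg1 s1 = kg1 s1 * (1 - lam*kg1 s1)^2 + lam * kg1 s1 * (lam * (tg1 s1)^2)"
          unfolding E(1) by (simp add: algebra_simps power2_eq_square)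
        also have "\<dots> = kg1 s1 * (1 - lam*kg1 s1)" unfolding r by (simp add: algebra_simps power2_eq_square)
        finally show ?thesis using r by linarith
      qed
      finally show ?thesis by linarith
    qed
    thus "kg1 s1 = lam * tg (phi s1) * tg1 s1" using A0 mult_left_cancel by blast
  }
qed

end
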